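(* Let $\lambda \geq 2$ be an integer and let $H(\lambda)_1, \dots, H(\lambda)_{r(\lambda)}$ be all graphs on $\lambda^2+2$ vertices that have at least one isolated vertex. Then there exists a positive integer $p'(\lambda)$ such that for every $i = 1, \dots, r(\lambda)$, the graph obtained from $H(\lambda)_i$ by adding a complete graph $K_{p'(\lambda)}$ on $p'(\lambda)$ new vertices and joining every new vertex to every vertex of $H(\lambda)_i$ has smallest adjacency eigenvalue less than $-\lambda$.
   Context: The smallest eigenvalue of a graph refers to the smallest eigenvalue of its adjacency matrix. (In the paper's language this graph is $G(\mathfrak{q}(H(\lambda)_i), p'(\lambda))$: the Hoffman graph $\mathfrak{q}(H)$ with one fat vertex adjacent to all vertices of $H$, with the fat vertex replaced by a clique $K_p$.) *)

theory Defs
  imports "Jordan_Normal_Form.Char_Poly"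
begin

definition simple_graph_on :: "nat \<Rightarrow> (nat \<Rightarrow> nat \<Rightarrow> bool) \<Rightarrow> bool" where
  "simple_graph_on n E \<longleftrightarrow> (\<forall>i<n. \<not> E i i) \<and> (\<forall>i<n. \<forall>j<n. E i j \<longleftrightarrow> E j i)"

definition has_isolated_vertex :: "nat \<Rightarrow> (nat \<Rightarrow> nat \<Rightarrow> bool) \<Rightarrow> bool" where
  "has_isolated_vertex n E \<longleftrightarrow> (\<exists>v<n. \<forall>u<n. \<not> E v u)"

definition adj_mat :: "nat \<Rightarrow> (nat \<Rightarrow> nat \<Rightarrow> bool) \<Rightarrow> real mat" where
  "adj_mat n E = mat n n (\<lambda>(i, j). if E i j then 1 else 0)"

text \<open>The graph obtained from (n, E) by adding a clique K_p on the new vertices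
  n, ..., n+p-1 and joining every new vertex to every old vertex.\<close>
definition join_clique :: "nat \<Rightarrow> (nat \<Rightarrow> nat \<Rightarrow> bool) \<Rightarrow> nat \<Rightarrow> nat \<Rightarrow> bool" where
  "join_clique n E i j \<longleftrightarrow> (if i < n \<and> j < n then E i j else i \<noteq> j)"

definition smallest_eigenvalue :: "real mat \<Rightarrow> real" where
  "smallest_eigenvalue A = Min {k. eigenvalue A k}"

end

theory Submission
  imports Defs "Jordan_Normal_Form.Spectral_Radius" "HOL-Analysis.Function_Topology"
begin


definition qf :: "nat \<Rightarrow> (nat \<Rightarrow> nat \<Rightarrow> real) \<Rightarrow> (nat \<Rightarrow> real) \<Rightarrow> real" where
  "qf N B y = (\<Sum>i<N. \<Sum>j<N. B i j * y i * y j)"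

lemma qf_expand:
  assumes sym: "\<And>i j. i < N \<Longrightarrow> j < N \<Longrightarrow> B i j = B j i" and k: "k < N"
  shows "qf N B (\<lambda>i. x i + t * (if i = k then 1 else 0)) =
    qf N B x + 2 * t * (\<Sum>j<N. B k j * x j) + t^2 * B k k"
proof -
  define e where "e = (\<lambda>i::nat. if i = k then (1::real) else 0)"
  have split: "(\<Sum>i<N. \<Sum>j<N. B i j * (x i + t * e i) * (x j + t * e j))
    = (\<Sum>i<N. \<Sum>j<N. B i j * x i * x j) + t * (\<Sum>i<N. \<Sum>j<N. B i j * e i * x j)
      + t * (\<Sum>i<N. \<Sum>j<N. B i j * x i * e j) + t^2 * (\<Sum>i<N. \<Sum>j<N. B i j * e i * e j)"
    by (simp add: algebra_simps sum.distrib sum_distrib_left power2_eq_square)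
  have s1: "(\<Sum>i<N. \<Sum>j<N. B i j * e i * x j) = (\<Sum>j<N. B k j * x j)"
  proof -
    have "(\<Sum>i<N. \<Sum>j<N. B i j * e i * x j) = (\<Sum>i<N. (if i = k then \<Sum>j<N. B k j * x j else 0))"
      using k by (intro sum.cong refl) (simp_all add: e_def if_distrib sum.delta cong: if_cong)
    then show ?thesis using k by simp
  qed
  have s2: "(\<Sum>i<N. \<Sum>j<N. B i j * x i * e j) = (\<Sum>i<N. B i k * x i)"
  proof -
    have "(\<Sum>i<N. \<Sum>j<N. B i j * x i * e j) = (\<Sum>i<N. B i k * x i)"
      using k by (intro sum.cong refl) (simp_all add: e_def if_distrib sum.delta cong: if_cong)
    then show ?thesis using k by simp
  qed
  have s3: "(\<Sum>i<N. \<Sum>j<N. B i j * e i * e j) = B k k"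
  proof -
    have "(\<Sum>i<N. \<Sum>j<N. B i j * e i * e j) = (\<Sum>i<N. (if i = k then B k k else 0))"
      using k by (intro sum.cong refl) (simp_all add: e_def if_distrib sum.delta cong: if_cong)
    then show ?thesis using k by simp
  qed
  have e: "(\<Sum>i<N. \<Sum>j<N. B i j * (x i + t * (if i = k then 1 else 0)) * (x j + t * (if j = k then 1 else 0)))
    = (\<Sum>i<N. \<Sum>j<N. B i j * x i * x j) + t * (\<Sum>j<N. B k j * x j) + t * (\<Sum>i<N. B i k * x i) + t^2 * B k k"
    using split s1 s2 s3 unfolding e_def by simp
  have "(\<Sum>i<N. B i k * x i) = (\<Sum>j<N. B k j * x j)"
    using sym k by (intro sum.cong) auto
  with e show ?thesis unfolding qf_def by simp
qed

lemma quad_nonneg_lin_zero: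
  fixes a b :: real
  assumes "\<And>t. a * t + b * t^2 \<ge> 0"
  shows "a = 0"
proof (rule ccontr)
  assume a: "a \<noteq> 0"
  define t where "t = - a / (2 * (\<bar>b\<bar> + 1))"
  have pos: "\<bar>b\<bar> + 1 > 0" by simp
  have "a * t + b * t^2 = -(a^2 / (2 * (\<bar>b\<bar> + 1))) + b * a^2 / (4 * (\<bar>b\<bar> + 1)^2)"
    unfolding t_def by (simp add: power2_eq_square field_simps)
  also have "b * a^2 / (4 * (\<bar>b\<bar> + 1)^2) \<le> a^2 / (4 * (\<bar>b\<bar> + 1))"
  proof -
    have "b * a^2 \<le> (\<bar>b\<bar> + 1) * a^2" by (intro mult_right_mono) auto
    then have "b * a^2 / (4 * (\<bar>b\<bar> + 1)^2) \<le> (\<bar>b\<bar> + 1) * a^2 / (4 * (\<bar>b\<bar> + 1)^2)"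
      by (intro divide_right_mono) auto
    also have "\<dots> = a^2 / (4 * (\<bar>b\<bar> + 1))"
    proof -
      have "\<And>c::real. c > 0 \<Longrightarrow> c * a^2 / (4 * c^2) = a^2 / (4 * c)"
        by (simp add: power2_eq_square)
      then show ?thesis using pos by blast
    qed
    finally show ?thesis .
  qed
  finally have "a * t + b * t^2 \<le> -(a^2 / (2 * (\<bar>b\<bar> + 1))) + a^2 / (4 * (\<bar>b\<bar> + 1))" by simp
  also have "\<dots> = -(a^2 / (4 * (\<bar>b\<bar> + 1)))"
  proof -
    have "\<And>c::real. c > 0 \<Longrightarrow> -(a^2 / (2 * c)) + a^2 / (4 * c) = -(a^2 / (4 * c))"
      by (simp add: field_simps)
    then show ?thesis using pos by blast
  qed
  also have "\<dots> < 0" using a pos by (simp add: divide_pos_pos)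
  finally show False using assms[of t] by simp
qed

lemma stationary:
  assumes sym: "\<And>i j. i < N \<Longrightarrow> j < N \<Longrightarrow> B i j = B j i"
    and nonneg: "\<And>y. qf N B y \<ge> 0" and z: "qf N B x = 0" and k: "k < N"
  shows "(\<Sum>j<N. B k j * x j) = 0"
proof -
  have "2 * (\<Sum>j<N. B k j * x j) = 0"
  proof (rule quad_nonneg_lin_zero)
    fix t
    show "2 * (\<Sum>j<N. B k j * x j) * t + B k k * t^2 \<ge> 0"
      using nonneg[of "\<lambda>i. x i + t * (if i = k then 1 else 0)"] qf_expand[OF sym k, where x=x and t=t] z
      by (simp add: algebra_simps)
  qed
  then show ?thesis by simp
qed
definition nn :: "nat \<Rightarrow> (nat \<Rightarrow> real) \<Rightarrow> real" where
  "nn N y = (\<Sum>i<N. (y i)^2)"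

lemma qf_cong: "(\<And>i. i < N \<Longrightarrow> y i = z i) \<Longrightarrow> qf N B y = qf N B z"
  unfolding qf_def by (intro sum.cong refl) auto

lemma nn_cong: "(\<And>i. i < N \<Longrightarrow> y i = z i) \<Longrightarrow> nn N y = nn N z"
  unfolding nn_def by (intro sum.cong refl) auto

lemma qf_scale: "qf N B (\<lambda>i. a * y i) = a^2 * qf N B y"
  unfolding qf_def by (simp add: sum_distrib_left power2_eq_square algebra_simps)

lemma nn_scale: "nn N (\<lambda>i. a * y i) = a^2 * nn N y"
  unfolding nn_def by (simp add: sum_distrib_left power2_eq_square algebra_simps)

lemma nn_zero: assumes "nn N y = 0" "i < N" shows "y i = 0"
proof -
  have "\<forall>i\<in>{..<N}. (y i)^2 = 0"
    using assms(1) unfolding nn_def by (subst sum_nonneg_eq_0_iff[symmetric]) auto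
  then show ?thesis using assms(2) by simp
qed

lemma nn_nonneg: "nn N y \<ge> 0" unfolding nn_def by (simp add: sum_nonneg)

lemma qf_zero: assumes "nn N y = 0" shows "qf N B y = 0"
  unfolding qf_def using nn_zero[OF assms] by simp

lemma qf_shift: "qf N (\<lambda>i j. B i j - (if i = j then m else 0)) y = qf N B y - m * nn N y"
proof -
  have "qf N (\<lambda>i j. B i j - (if i = j then m else 0)) y
     = qf N B y - (\<Sum>i<N. \<Sum>j<N. (if i = j then m else 0) * y i * y j)"
    unfolding qf_def by (simp add: algebra_simps sum_subtractf)
  also have "(\<Sum>i<N. \<Sum>j<N. (if i = j then m else 0) * y i * y j) = (\<Sum>i<N. m * (y i)^2)"
  proof (intro sum.cong refl)
    fix i assume i: "i \<in> {..<N}"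
    have "(\<Sum>j<N. (if i = j then m else 0) * y i * y j) = (\<Sum>j<N. if i = j then m * y i * y j else 0)"
      by (intro sum.cong) auto
    also have "\<dots> = m * (y i)^2" using i by (simp add: power2_eq_square)
    finally show "(\<Sum>j<N. (if i = j then m else 0) * y i * y j) = m * (y i)^2" .
  qed
  also have "\<dots> = m * nn N y" unfolding nn_def by (simp add: sum_distrib_left)
  finally show ?thesis .
qed

lemma cont_nn: "continuous_on UNIV (nn N)"
  unfolding nn_def by (intro continuous_intros continuous_on_product_coordinates)

lemma cont_qf: "continuous_on UNIV (qf N B)"
  unfolding qf_def by (intro continuous_intros continuous_on_product_coordinates)

lemma rayleigh:
  assumes sym: "\<And>i j. i < N \<Longrightarrow> j < N \<Longrightarrow> B i j = B j i"
    and x: "qf N B x < c * nn N x"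
  shows "\<exists>m v. m < c \<and> (\<exists>i<N. v i \<noteq> 0) \<and> (\<forall>k<N. (\<Sum>j<N. B k j * v j) = m * v k)"
proof -
  define S where "S = PiE UNIV (\<lambda>i. if i < N then {-1..1::real} else {0}) \<inter> {y. nn N y = 1}"
  have "compactin (product_topology (\<lambda>_. euclidean) UNIV) (PiE UNIV (\<lambda>i::nat. if i < N then {-1..1::real} else {0}))"
    unfolding compactin_PiE by auto
  then have c1: "compact (PiE UNIV (\<lambda>i::nat. if i < N then {-1..1::real} else {0}))"
    by (simp add: euclidean_product_topology compactin_euclidean_iff)
  have "closed {y. nn N y = 1}"
    using closed_Collect_eq[OF cont_nn continuous_on_const] by simp
  with c1 have cS: "compact S" unfolding S_def by (rule compact_Int_closed)
  define nrm where "nrm = (\<lambda>y::nat\<Rightarrow>real. \<lambda>i. if i < N then y i / sqrt (nn N y) else 0)"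
  have nrm_S: "nrm y \<in> S" if "nn N y \<noteq> 0" for y
  proof -
    have pos: "nn N y > 0" using that nn_nonneg[of N y] by linarith
    have "nn N (nrm y) = nn N (\<lambda>i. (1 / sqrt (nn N y)) * y i)"
      by (intro nn_cong) (simp add: nrm_def)
    also have "\<dots> = (1 / sqrt (nn N y))^2 * nn N y" by (rule nn_scale)
    also have "\<dots> = 1" using pos by (simp add: power_divide)
    finally have n1: "nn N (nrm y) = 1" .
    have b: "nrm y i \<in> (if i < N then {-1..1} else {0})" for i
    proof (cases "i < N")
      case True
      have "(nrm y i)^2 \<le> nn N (nrm y)"
        unfolding nn_def using True by (intro member_le_sum) auto
      then have "\<bar>nrm y i\<bar> \<le> 1" using n1 by (simp add: abs_square_le_1)
      then show ?thesis using True by (simp add: abs_le_iff)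
    next
      case False then show ?thesis by (simp add: nrm_def)
    qed
    then show ?thesis using n1 unfolding S_def by (simp add: PiE_UNIV_domain)
  qed
  have qf_nrm: "qf N B y = nn N y * qf N B (nrm y)" if "nn N y \<noteq> 0" for y
  proof -
    have pos: "nn N y > 0" using that nn_nonneg[of N y] by linarith
    have "qf N B (nrm y) = qf N B (\<lambda>i. (1 / sqrt (nn N y)) * y i)"
      by (intro qf_cong) (simp add: nrm_def)
    also have "\<dots> = (1 / sqrt (nn N y))^2 * qf N B y" by (rule qf_scale)
    also have "\<dots> = qf N B y / nn N y" using pos by (simp add: power_divide)
    finally show ?thesis using pos by simp
  qed
  have nnx: "nn N x \<noteq> 0"
  proof
    assume "nn N x = 0"
    then show False using x qf_zero[of N x B] by simp
  qed
  have "S \<noteq> {}" using nrm_S[OF nnx] by auto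
  from continuous_attains_inf[OF cS this continuous_on_subset[OF cont_qf subset_UNIV]]
  obtain y0 where y0: "y0 \<in> S" and min: "\<And>y. y \<in> S \<Longrightarrow> qf N B y0 \<le> qf N B y" by blast
  define m where "m = qf N B y0"
  have ny0: "nn N y0 = 1" using y0 unfolding S_def by auto
  have "m * nn N x \<le> qf N B x"
    using min[OF nrm_S[OF nnx]] qf_nrm[OF nnx] nn_nonneg[of N x] unfolding m_def
    by (simp add: mult.commute mult_left_mono)
  with x have "m * nn N x < c * nn N x" by simp
  then have mc: "m < c" using nnx nn_nonneg[of N x]
    using mult_right_less_imp_less by blast
  have ge: "qf N B y \<ge> m * nn N y" for y
  proof (cases "nn N y = 0")
    case True then show ?thesis using qf_zero[OF True] by simp
  next
    case False
    then show ?thesis using min[OF nrm_S[OF False]] qf_nrm[OF False] nn_nonneg[of N y] unfolding m_def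
      by (simp add: mult.commute mult_left_mono)
  qed
  define BB where "BB = (\<lambda>i j. B i j - (if i = j then m else 0))"
  have symB: "\<And>i j. i < N \<Longrightarrow> j < N \<Longrightarrow> BB i j = BB j i" using sym unfolding BB_def by auto
  have nonneg: "\<And>y. qf N BB y \<ge> 0" using ge unfolding BB_def qf_shift by simp
  have z: "qf N BB y0 = 0" unfolding BB_def qf_shift m_def ny0 by simp
  have eig: "(\<Sum>j<N. B k j * y0 j) = m * y0 k" if k: "k < N" for k
  proof -
    have "(\<Sum>j<N. BB k j * y0 j) = 0" by (rule stationary[OF symB nonneg z k])
    moreover have "(\<Sum>j<N. BB k j * y0 j) = (\<Sum>j<N. B k j * y0 j) - m * y0 k"
    proof -
      have "(\<Sum>j<N. BB k j * y0 j) = (\<Sum>j<N. B k j * y0 j - (if k = j then m * y0 k else 0))"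
        unfolding BB_def by (intro sum.cong) (auto simp: algebra_simps)
      also have "\<dots> = (\<Sum>j<N. B k j * y0 j) - m * y0 k"
        using k by (simp add: sum_subtractf)
      finally show ?thesis .
    qed
    ultimately show ?thesis by simp
  qed
  have "\<exists>i<N. y0 i \<noteq> 0"
  proof (rule ccontr)
    assume "\<not> ?thesis"
    then have "nn N y0 = 0" unfolding nn_def by simp
    with ny0 show False by simp
  qed
  with mc eig show ?thesis by blast
qed
lemma eig_from_fun:
  assumes nz: "\<exists>i<N. v i \<noteq> 0" and ev: "\<forall>k<N. (\<Sum>j<N. B k j * v j) = m * v k"
  shows "eigenvalue (mat N N (\<lambda>(i,j). B i j)) m"
  unfolding eigenvalue_def eigenvector_def
proof (intro exI[of _ "vec N v"] conjI)
  show "vec N v \<in> carrier_vec (dim_row (mat N N (\<lambda>(i,j). B i j)))" by simp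
  show "vec N v \<noteq> 0\<^sub>v (dim_row (mat N N (\<lambda>(i,j). B i j)))"
  proof
    assume "vec N v = 0\<^sub>v (dim_row (mat N N (\<lambda>(i,j). B i j)))"
    then have "\<forall>i<N. v i = 0" by (metis dim_row_mat(1) index_vec index_zero_vec(1))
    with nz show False by auto
  qed
  show "mat N N (\<lambda>(i,j). B i j) *\<^sub>v vec N v = m \<cdot>\<^sub>v vec N v"
  proof (rule eq_vecI)
    fix k assume "k < dim_vec (m \<cdot>\<^sub>v vec N v)"
    then have k: "k < N" by simp
    have "(mat N N (\<lambda>(i,j). B i j) *\<^sub>v vec N v) $ k = (\<Sum>j<N. B k j * v j)"
      using k by (simp add: scalar_prod_def row_def lessThan_atLeast0)
    also have "\<dots> = m * v k" using ev k by simp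
    finally show "(mat N N (\<lambda>(i,j). B i j) *\<^sub>v vec N v) $ k = (m \<cdot>\<^sub>v vec N v) $ k"
      using k by simp
  qed simp
qed

lemma min_le_eig:
  fixes A :: "real mat"
  assumes "A \<in> carrier_mat N N" "eigenvalue A m"
  shows "Min {k. eigenvalue A k} \<le> m"
proof -
  have "finite {k. eigenvalue A k}"
    using card_finite_spectrum(1)[OF assms(1)] unfolding spectrum_def .
  then show ?thesis using assms(2) by (intro Min_le) auto
qed



lemma split_sum: "n \<le> (N::nat) \<Longrightarrow> (\<Sum>i<N. f i) = (\<Sum>i<n. f i) + (\<Sum>i\<in>{n..<N}. f i)"
  by (metis atLeast0LessThan sum.atLeastLessThan_concat zero_le)

lemma restrict_sum:
  assumes "A \<subseteq> {..<N::nat}"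
  shows "(\<Sum>j<N. if j \<in> A then f j else 0) = (\<Sum>j\<in>A. f j)"
proof -
  have "(\<Sum>j<N. if j \<in> A then f j else 0) = sum f ({..<N} \<inter> A)"
    by (rule sum.inter_restrict[symmetric]) simp
  also have "{..<N} \<inter> A = A" using assms by auto
  finally show ?thesis .
qed

lemma qf_diff: "qf N (\<lambda>i j. B i j - C i j) x = qf N B x - qf N C x"
  unfolding qf_def by (simp add: algebra_simps sum_subtractf)

lemma qf_ones: "qf N (\<lambda>i j. 1) x = (\<Sum>i<N. x i)^2"
  unfolding qf_def by (simp add: power2_eq_square sum_product mult.assoc)

lemma qf_mcong: "(\<And>i j. i < N \<Longrightarrow> j < N \<Longrightarrow> B i j = C i j) \<Longrightarrow> qf N B x = qf N C x"
  unfolding qf_def by (intro sum.cong refl) auto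

lemma test_bound:
  fixes lam n v :: nat and E
  assumes sg: "simple_graph_on n E" and vn: "v < n" and iso: "\<forall>u<n. \<not> E v u" and n: "n = lam^2 + 2"
    and lam: "lam \<ge> 2"
  defines "s \<equiv> lam^2 + lam + 1"
  defines "N \<equiv> n + s^2"
  defines "B \<equiv> \<lambda>i j. if join_clique n E i j then (1::real) else 0"
  defines "x \<equiv> \<lambda>i. if i = v then real lam * real s else if i < n then real s else -1"
  shows "qf N B x < - real lam * nn N x"
proof -
  define L where "L = real lam"
  define S where "S = real s"
  have SL: "S = L^2 + L + 1" unfolding S_def L_def s_def by simp
  have L2: "L \<ge> 2" using lam unfolding L_def by simp
  have Spos: "S > 0" using SL L2 by (smt (verit) zero_le_power2)
  have nN: "n \<le> N" unfolding N_def by simp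
  have vN: "v < N" using vn nN by simp
  have cardR: "card ({..<n} - {v}) = n - 1" using vn by simp
  have rn1: "real (n - 1) = L^2 + 1" using n unfolding L_def by simp
  have cardK: "card {n..<N} = s^2" unfolding N_def by simp
  have sumH: "(\<Sum>i<n. x i) = L * S + (L^2 + 1) * S"
  proof -
    have "(\<Sum>i<n. x i) = x v + (\<Sum>i\<in>{..<n} - {v}. x i)"
      using vn by (simp add: sum.remove)
    also have "(\<Sum>i\<in>{..<n} - {v}. x i) = (\<Sum>i\<in>{..<n} - {v}. S)"
      by (intro sum.cong) (auto simp: x_def S_def)
    also have "\<dots> = (L^2 + 1) * S" using cardR rn1 by simp
    finally show ?thesis by (simp add: x_def L_def S_def)
  qed
  have sumK: "(\<Sum>i\<in>{n..<N}. x i) = - (S^2)"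
  proof -
    have "(\<Sum>i\<in>{n..<N}. x i) = (\<Sum>i\<in>{n..<N}. -1)"
      using vn by (intro sum.cong) (auto simp: x_def)
    also have "\<dots> = - (S^2)" using cardK unfolding S_def by simp
    finally show ?thesis .
  qed
  have sumx: "(\<Sum>i<N. x i) = 0"
    using split_sum[OF nN, of x] sumH sumK SL by (simp add: power2_eq_square algebra_simps)
  have nnH: "(\<Sum>i<n. (x i)^2) = L^2 * S^2 + (L^2 + 1) * S^2"
  proof -
    have "(\<Sum>i<n. (x i)^2) = (x v)^2 + (\<Sum>i\<in>{..<n} - {v}. (x i)^2)"
      using vn by (simp add: sum.remove)
    also have "(\<Sum>i\<in>{..<n} - {v}. (x i)^2) = (\<Sum>i\<in>{..<n} - {v}. S^2)"
      by (intro sum.cong) (auto simp: x_def S_def)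
    also have "\<dots> = (L^2 + 1) * S^2" using cardR rn1 by simp
    finally show ?thesis by (simp add: x_def L_def S_def power_mult_distrib)
  qed
  have nnK: "(\<Sum>i\<in>{n..<N}. (x i)^2) = S^2"
  proof -
    have "(\<Sum>i\<in>{n..<N}. (x i)^2) = (\<Sum>i\<in>{n..<N}. 1)"
      using vn by (intro sum.cong) (auto simp: x_def)
    also have "\<dots> = S^2" using cardK unfolding S_def by simp
    finally show ?thesis .
  qed
  have nnx: "nn N x = S^2 * (2 * L^2 + 2)"
    using split_sum[OF nN, of "\<lambda>i. (x i)^2"] nnH nnK unfolding nn_def by (simp add: algebra_simps)
  define C where "C = (\<lambda>i j. if i < n \<and> j < n \<and> i \<noteq> j \<and> \<not> E i j then (1::real) else 0)"
  define I where "I = (\<lambda>i j::nat. 1 - (if i = j then (1::real) else 0))"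
  have BIC: "qf N B x = qf N (\<lambda>i j. I i j - C i j) x"
    using sg unfolding simple_graph_on_def
    by (intro qf_mcong) (auto simp: B_def I_def C_def join_clique_def)
  have qI: "qf N I x = - nn N x"
    using qf_shift[of N "\<lambda>i j. 1" 1 x] qf_ones[of N x] sumx unfolding I_def by simp
  define D where "D = (\<lambda>i j. (if i = v \<and> j < n \<and> j \<noteq> v then 1 else 0)
     + (if j = v \<and> i < n \<and> i \<noteq> v then (1::real) else 0))"
  have xpos: "x i > 0" if "i < n" for i
    using that Spos L2 unfolding x_def L_def S_def by auto
  have DC: "D i j * x i * x j \<le> C i j * x i * x j" for i j
  proof -
    have Evi: "\<not> E i v" if "i < n" using sg iso vn that unfolding simple_graph_on_def by blast
    consider "i = v \<and> j < n \<and> j \<noteq> v" | "j = v \<and> i < n \<and> i \<noteq> v"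
      | "\<not> (i = v \<and> j < n \<and> j \<noteq> v) \<and> \<not> (j = v \<and> i < n \<and> i \<noteq> v)" by blast
    then show ?thesis
    proof cases
      case 1 then show ?thesis using iso vn by (auto simp: C_def D_def)
    next
      case 2 then show ?thesis using Evi vn by (auto simp: C_def D_def)
    next
      case 3
      then have "D i j = 0" unfolding D_def by auto
      moreover have "C i j * x i * x j \<ge> 0"
        using xpos[of i] xpos[of j] by (auto simp: C_def)
      ultimately show ?thesis by simp
    qed
  qed
  have qCD: "qf N D x \<le> qf N C x"
    unfolding qf_def by (intro sum_mono DC)
  have D1: "(\<Sum>i<N. \<Sum>j<N. (if i = v \<and> j < n \<and> j \<noteq> v then (1::real) else 0) * x i * x j)
      = L * S * ((L^2 + 1) * S)"
  proof -
    have "(\<Sum>i<N. \<Sum>j<N. (if i = v \<and> j < n \<and> j \<noteq> v then (1::real) else 0) * x i * x j)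
       = (\<Sum>i<N. if i = v then (\<Sum>j<N. if j \<in> {..<n} - {v} then x v * x j else 0) else 0)"
      by (intro sum.cong refl) (auto intro!: sum.cong)
    also have "\<dots> = (\<Sum>j<N. if j \<in> {..<n} - {v} then x v * x j else 0)"
      using vN by (simp add: sum.delta)
    also have "\<dots> = (\<Sum>j\<in>{..<n} - {v}. x v * x j)"
      using nN by (intro restrict_sum) auto
    also have "\<dots> = (\<Sum>j\<in>{..<n} - {v}. L * S * S)"
      by (intro sum.cong) (auto simp: x_def L_def S_def)
    also have "\<dots> = L * S * ((L^2 + 1) * S)" using cardR rn1 by simp
    finally show ?thesis .
  qed
  have D2: "(\<Sum>i<N. \<Sum>j<N. (if j = v \<and> i < n \<and> i \<noteq> v then (1::real) else 0) * x i * x j)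
      = L * S * ((L^2 + 1) * S)"
  proof -
    have "(\<Sum>i<N. \<Sum>j<N. (if j = v \<and> i < n \<and> i \<noteq> v then (1::real) else 0) * x i * x j)
       = (\<Sum>j<N. \<Sum>i<N. (if j = v \<and> i < n \<and> i \<noteq> v then (1::real) else 0) * x j * x i)"
      by (subst sum.swap) (simp add: mult_ac)
    also have "\<dots> = L * S * ((L^2 + 1) * S)" using D1 by simp
    finally show ?thesis .
  qed
  have qD: "qf N D x = 2 * L * S * ((L^2 + 1) * S)"
    unfolding qf_def D_def using D1 D2 by (simp add: algebra_simps sum.distrib)
  have "qf N B x = - nn N x - qf N C x" using BIC qf_diff[of N I C x] qI by simp
  also have "\<dots> \<le> - (S^2 * (2 * L^2 + 2)) - 2 * L * S * ((L^2 + 1) * S)"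
    using qCD qD nnx by simp
  also have "\<dots> = - (1 + L) * (S^2 * (2 * L^2 + 2))" by (simp add: power2_eq_square algebra_simps)
  also have "\<dots> < - L * (S^2 * (2 * L^2 + 2))"
  proof -
    have "2 * L^2 + 2 > 0" by (simp add: add_nonneg_pos)
    then have "S^2 * (2 * L^2 + 2) > 0" using Spos by simp
    then show ?thesis by (simp add: algebra_simps)
  qed
  also have "\<dots> = - real lam * nn N x" using nnx L_def by simp
  finally show ?thesis .
qed

theorem mainTheorem4:
  fixes lam :: nat
  assumes "lam \<ge> 2"
  shows "\<exists>p::nat. p > 0 \<and>
           (\<forall>E. simple_graph_on (lam^2 + 2) E \<and> has_isolated_vertex (lam^2 + 2) E \<longrightarrow>
              smallest_eigenvalue (adj_mat (lam^2 + 2 + p) (join_clique (lam^2 + 2) E))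
                < - real lam)"
proof (intro exI[of _ "(lam^2 + lam + 1)^2"] conjI allI impI)
  show "(lam^2 + lam + 1)^2 > 0" by simp
  fix E assume H: "simple_graph_on (lam^2 + 2) E \<and> has_isolated_vertex (lam^2 + 2) E"
  define n where "n = lam^2 + 2"
  define N where "N = n + (lam^2 + lam + 1)^2"
  define B where "B = (\<lambda>i j. if join_clique n E i j then (1::real) else 0)"
  have sg: "simple_graph_on n E" using H n_def by simp
  obtain v where vn: "v < n" and iso: "\<forall>u<n. \<not> E v u"
    using H unfolding has_isolated_vertex_def n_def by blast
  define x where "x = (\<lambda>i. if i = v then real lam * real (lam^2 + lam + 1) else if i < n then real (lam^2 + lam + 1) else -1)"
  have tb: "qf N B x < - real lam * nn N x"
    using test_bound[OF sg vn iso n_def assms] unfolding N_def B_def x_def by simp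
  have sym: "\<And>i j. i < N \<Longrightarrow> j < N \<Longrightarrow> B i j = B j i"
    using sg unfolding B_def join_clique_def simple_graph_on_def by auto
  from rayleigh[OF sym tb] obtain m w where m: "m < - real lam" and nz: "\<exists>i<N. w i \<noteq> 0"
    and ev: "\<forall>k<N. (\<Sum>j<N. B k j * w j) = m * w k" by blast
  have eig: "eigenvalue (mat N N (\<lambda>(i,j). B i j)) m" by (rule eig_from_fun[OF nz ev])
  have A: "adj_mat (lam^2 + 2 + (lam^2 + lam + 1)^2) (join_clique (lam^2 + 2) E) = mat N N (\<lambda>(i,j). B i j)"
    unfolding adj_mat_def N_def n_def B_def by simp
  have "smallest_eigenvalue (mat N N (\<lambda>(i,j). B i j)) \<le> m"
    unfolding smallest_eigenvalue_def by (rule min_le_eig[where N=N, OF _ eig]) simp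
  with m A show "smallest_eigenvalue (adj_mat (lam^2 + 2 + (lam^2 + lam + 1)^2) (join_clique (lam^2 + 2) E)) < - real lam"
    by simp
qed

end
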